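(* Let $a,b,c\in\mathbb{R}$ with $c\neq 0$, and let $c_{1,2}=-\frac{2}{27}a^3+\frac13 ab\pm\frac{2}{27}\sqrt{(a^2-3b)^3}$ (defined when $b\le a^2/3$; upper sign for $c_1$). The cubic $x^3+ax^2+bx+c$ has three positive real roots (counted with multiplicity) if and only if $a<0$ and either (i) $0<b\le a^2/4$ and $c_2\le c<0$, or (ii) $a^2/4<b\le a^2/3$ and $c_2\le c\le c_1<0$. *)

theory Defs
  imports Complex_Main "HOL-Computational_Algebra.Polynomial"
begin

definition cubic_c1 :: "real \<Rightarrow> real \<Rightarrow> real" where
  "cubic_c1 a b = -(2/27) * a^3 + (1/3) * a * b + (2/27) * sqrt ((a^2 - 3*b)^3)"

definition cubic_c2 :: "real \<Rightarrow> real \<Rightarrow> real" where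
  "cubic_c2 a b = -(2/27) * a^3 + (1/3) * a * b - (2/27) * sqrt ((a^2 - 3*b)^3)"

definition three_pos_roots :: "real \<Rightarrow> real \<Rightarrow> real \<Rightarrow> bool" where
  "three_pos_roots a b c \<longleftrightarrow>
     (\<exists>r1 r2 r3. r1 > 0 \<and> r2 > 0 \<and> r3 > 0 \<and>
        [:c, b, a, 1:] = [:-r1, 1:] * [:-r2, 1:] * [:-r3, 1:])"

end

theory Submission
  imports Defs
begin


lemma poly_eq3:
  fixes a b c r1 r2 r3 :: real
  shows "[:c, b, a, 1:] = [:-r1, 1:] * [:-r2, 1:] * [:-r3, 1:] \<longleftrightarrow>
    (a = -(r1+r2+r3) \<and> b = r1*r2+r1*r3+r2*r3 \<and> c = -(r1*r2*r3))"
  by (auto simp: algebra_simps)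

lemma disc_eq:
  fixes a b c :: real
  assumes "a^2 - 3*b \<ge> 0"
  shows "18*a*b*c - 4*a^3*c + a^2*b^2 - 4*b^3 - 27*c^2
         = -27 * ((c - cubic_c1 a b) * (c - cubic_c2 a b))"
proof -
  define t where "t = sqrt ((a^2 - 3*b)^3)"
  have t2: "t^2 = (a^2 - 3*b)^3" unfolding t_def using assms by simp
  have "(c - cubic_c1 a b) * (c - cubic_c2 a b)
      = (c - (-(2/27) * a^3 + (1/3) * a * b))^2 - (2/27)^2 * t^2"
    unfolding cubic_c1_def cubic_c2_def t_def[symmetric] by algebra
  also have "\<dots> = (c - (-(2/27) * a^3 + (1/3) * a * b))^2 - (2/27)^2 * (a^2 - 3*b)^3"
    by (simp only: t2)
  finally show ?thesis by algebra
qed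

lemma c1_eq:
  fixes a b :: real
  assumes "a^2 - 3*b \<ge> 0"
  defines "s \<equiv> sqrt (a^2 - 3*b)"
  defines "x \<equiv> (-a + s)/3"
  shows "cubic_c1 a b = -(x * (x^2 + a*x + b))"
proof -
  have s2: "s^2 = a^2 - 3*b" unfolding s_def using assms by simp
  have "sqrt ((a^2 - 3*b)^3) = s^3" unfolding s_def by (simp add: real_sqrt_power)
  then have "cubic_c1 a b = -(2/27) * a^3 + (1/3) * a * b + (2/27) * s^3"
    unfolding cubic_c1_def by simp
  also have "\<dots> = -(x * (x^2 + a*x + b))"
  proof -
    have b: "b = (a^2 - s^2)/3" using s2 by simp
    show ?thesis unfolding x_def b by (simp add: field_simps power2_eq_square power3_eq_cube)
  qed
  finally show ?thesis .
qed


lemma pos_root: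
  fixes a b c x :: real
  assumes "a < 0" "b > 0" "c < 0" "x^3 + a*x^2 + b*x + c = 0"
  shows "x > 0"
proof (rule ccontr)
  assume "\<not> x > 0" then have x: "x \<le> 0" by simp
  have "x^3 = (x*x)*x" by (simp add: power3_eq_cube)
  also have "\<dots> \<le> 0" using x by (intro mult_nonneg_nonpos) auto
  finally have "x^3 \<le> 0" .
  moreover have "a*x^2 \<le> 0" using assms(1) by (simp add: mult_nonpos_nonneg)
  moreover have "b*x \<le> 0" using assms(2) x by (simp add: mult_nonneg_nonpos)
  ultimately show False using assms(3,4) by linarith
qed

lemma exists_root:
  fixes a b c :: real
  assumes "a < 0" "b > 0" "c < 0"
  shows "\<exists>r. r^3 + a*r^2 + b*r + c = 0"
proof -
  define M where "M = 1 - a + b - c"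
  have M1: "M \<ge> 1" unfolding M_def using assms by simp
  have "M^2 \<ge> 1" using M1 by (simp add: one_le_power)
  then have "c * M^2 \<le> c" using assms(3) by (simp add: mult_le_cancel_left1)
  moreover have "b*M \<ge> 0" using assms M1 by simp
  ultimately have "M^3 + a*M^2 + b*M + c \<ge> M^2 * (M + a + c)"
    by (simp add: algebra_simps power3_eq_cube power2_eq_square)
  moreover have "M^2 * (M + a + c) > 0" using M1 assms unfolding M_def by simp
  ultimately have pos: "M^3 + a*M^2 + b*M + c > 0" by linarith
  have "\<exists>x. 0 \<le> x \<and> x \<le> M \<and> x^3 + a*x^2 + b*x + c = 0"
    apply (rule IVT[of "\<lambda>x. x^3 + a*x^2 + b*x + c"])
    using pos assms M1 by (auto intro!: continuous_intros)
  then show ?thesis by blast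
qed

theorem mainTheorem5:
  fixes a b c :: real
  assumes "c \<noteq> 0"
  shows "three_pos_roots a b c \<longleftrightarrow>
    a < 0 \<and>
    ((0 < b \<and> b \<le> a^2/4 \<and> cubic_c2 a b \<le> c \<and> c < 0) \<or>
     (a^2/4 < b \<and> b \<le> a^2/3 \<and> cubic_c2 a b \<le> c \<and> c \<le> cubic_c1 a b \<and> cubic_c1 a b < 0))"
proof
  assume "three_pos_roots a b c"
  then obtain r1 r2 r3 where r: "r1 > 0" "r2 > 0" "r3 > 0"
    and abc: "a = -(r1+r2+r3)" "b = r1*r2+r1*r3+r2*r3" "c = -(r1*r2*r3)"
    unfolding three_pos_roots_def poly_eq3 by blast
  have a: "a < 0" using r abc by simp
  have bpos: "b > 0" unfolding abc(2) using r by (intro add_pos_pos mult_pos_pos) auto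
  have c: "c < 0" using r abc by simp
  have D: "a^2 - 3*b = ((r1-r2)^2 + (r1-r3)^2 + (r2-r3)^2)/2"
    unfolding abc by (simp add: field_simps power2_eq_square)
  have D0: "a^2 - 3*b \<ge> 0" unfolding D by simp
  have "18*a*b*c - 4*a^3*c + a^2*b^2 - 4*b^3 - 27*c^2 = ((r1-r2)*(r1-r3)*(r2-r3))^2"
    unfolding abc by algebra

  then have "(c - cubic_c1 a b) * (c - cubic_c2 a b) \<le> 0"
    using disc_eq[OF D0, of c] zero_le_power2[of "(r1-r2)*(r1-r3)*(r2-r3)"] by linarith
  have c12: "cubic_c2 a b \<le> cubic_c1 a b" unfolding cubic_c1_def cubic_c2_def using D0 by simp
  have cc: "cubic_c2 a b \<le> c \<and> c \<le> cubic_c1 a b"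
  proof (rule ccontr)
    assume "\<not> ?thesis"
    then consider "c < cubic_c2 a b" | "c > cubic_c1 a b" by linarith
    then have "(c - cubic_c1 a b) * (c - cubic_c2 a b) > 0"
    proof cases
      case 1 then show ?thesis using c12 by (intro mult_neg_neg) auto
    next
      case 2 then show ?thesis using c12 by (intro mult_pos_pos) auto
    qed
    then show False using \<open>(c - cubic_c1 a b) * (c - cubic_c2 a b) \<le> 0\<close> by simp
  qed
  show "a < 0 \<and>
    ((0 < b \<and> b \<le> a^2/4 \<and> cubic_c2 a b \<le> c \<and> c < 0) \<or>
     (a^2/4 < b \<and> b \<le> a^2/3 \<and> cubic_c2 a b \<le> c \<and> c \<le> cubic_c1 a b \<and> cubic_c1 a b < 0))"
  proof (cases "b \<le> a^2/4")
    case True then show ?thesis using a bpos c cc by simp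
  next
    case False
    define s where "s = sqrt (a^2 - 3*b)"
    define x where "x = (-a + s)/3"
    have s0: "s \<ge> 0" unfolding s_def using D0 by simp
    have x0: "x > 0" unfolding x_def using s0 a by simp
    have "x^2 + a*x + b = (x + a/2)^2 + (b - a^2/4)" by (simp add: algebra_simps power2_eq_square)
    also have "\<dots> > 0" using False by (intro add_nonneg_pos) auto
    finally have "x * (x^2 + a*x + b) > 0" using x0 by simp
    moreover have "cubic_c1 a b = -(x * (x^2 + a*x + b))" using c1_eq[OF D0] unfolding x_def s_def .
    ultimately have "cubic_c1 a b < 0" by linarith
    then show ?thesis using a cc False D0 by simp
  qed
next
  assume H: "a < 0 \<and>
    ((0 < b \<and> b \<le> a^2/4 \<and> cubic_c2 a b \<le> c \<and> c < 0) \<or>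
     (a^2/4 < b \<and> b \<le> a^2/3 \<and> cubic_c2 a b \<le> c \<and> c \<le> cubic_c1 a b \<and> cubic_c1 a b < 0))"
  have a: "a < 0" using H by simp
  have bpos: "b > 0" using H by (smt (verit) zero_le_power2 divide_nonneg_pos)
  have D0: "a^2 - 3*b \<ge> 0" using H by auto
  have c: "c < 0" using H by auto
  have c2: "cubic_c2 a b \<le> c" using H by auto
  have c1: "c \<le> cubic_c1 a b"
  proof (cases "b \<le> a^2/4")
    case False then show ?thesis using H by auto
  next
    case True
    define s where "s = sqrt (a^2 - 3*b)"
    define x where "x = (-a + s)/3"
    have s0: "s \<ge> 0" unfolding s_def using D0 by simp
    have s2: "s^2 = a^2 - 3*b" unfolding s_def using D0 by simp
    have x0: "x > 0" unfolding x_def using s0 a by simp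
    have "4*s^2 \<ge> a^2" using True s2 by simp
    then have "(2*s)^2 \<ge> (-a)^2" by simp
    then have "2*s \<ge> -a" by (rule power2_le_imp_le) (simp add: s0)
    then have f1: "a + 2*s \<ge> 0" by simp
    have f2: "a - s < 0" using a s0 by simp
    have "(a + 2*s) * (a - s) \<le> 0" using f1 f2 by (simp add: mult_nonneg_nonpos)
    have bb: "b = (a^2 - s^2)/3" using s2 by simp
    have "x^2 + a*x + b = ((a + 2*s) * (a - s)) / 9"
      unfolding x_def bb by (simp add: field_simps power2_eq_square)
    also have "\<dots> \<le> 0" using \<open>(a + 2*s) * (a - s) \<le> 0\<close> by simp
    finally have "x * (x^2 + a*x + b) \<le> 0" using x0 by (simp add: mult_nonneg_nonpos)
    moreover have "cubic_c1 a b = -(x * (x^2 + a*x + b))" using c1_eq[OF D0] unfolding x_def s_def .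
    ultimately have "cubic_c1 a b \<ge> 0" by linarith
    then show ?thesis using c by simp
  qed
  have c12: "(c - cubic_c1 a b) * (c - cubic_c2 a b) \<le> 0" using c1 c2 by (simp add: mult_nonpos_nonneg)
  have Dpos: "18*a*b*c - 4*a^3*c + a^2*b^2 - 4*b^3 - 27*c^2 \<ge> 0"
    using disc_eq[OF D0, of c] c12 by linarith
  obtain r1 where r1: "r1^3 + a*r1^2 + b*r1 + c = 0" using exists_root[OF a bpos c] by blast
  define p where "p = a + r1"
  define q where "q = b + r1*p"
  have abc: "a = p - r1" "b = q - r1*p" "c = -(r1*q)"
    using r1 unfolding p_def q_def by (auto simp: algebra_simps power2_eq_square power3_eq_cube)
  have Deq: "18*a*b*c - 4*a^3*c + a^2*b^2 - 4*b^3 - 27*c^2 = (p^2 - 4*q) * (r1^2 + p*r1 + q)^2"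
    unfolding abc by algebra
  have d0: "p^2 - 4*q \<ge> 0"
  proof (cases "r1^2 + p*r1 + q = 0")
    case True
    have "p^2 - 4*q = (2*r1 + p)^2 - 4*(r1^2 + p*r1 + q)" by algebra
    then have "p^2 - 4*q = (2*r1 + p)^2" using True by simp
    then show ?thesis by simp
  next
    case False
    then have "(r1^2 + p*r1 + q)^2 > 0" by simp
    then show ?thesis using Dpos Deq by (simp add: zero_le_mult_iff)
  qed
  define r2 where "r2 = (-p + sqrt (p^2 - 4*q))/2"
  define r3 where "r3 = (-p - sqrt (p^2 - 4*q))/2"
  have sq: "(sqrt (p^2 - 4*q))^2 = p^2 - 4*q" using d0 by simp
  have sum: "r2 + r3 = -p" unfolding r2_def r3_def by (simp add: field_simps)
  have prod: "r2 * r3 = q"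
  proof -
    have "r2*r3 = (p^2 - (sqrt (p^2-4*q))^2)/4" unfolding r2_def r3_def by (simp add: field_simps power2_eq_square)
    then show ?thesis using sq by simp
  qed
  have abc': "a = -(r1+r2+r3)" "b = r1*r2+r1*r3+r2*r3" "c = -(r1*r2*r3)"
  proof -
    have pe: "p = -(r2+r3)" using sum by simp
    show "a = -(r1+r2+r3)" using abc(1) pe by simp
    show "b = r1*r2+r1*r3+r2*r3" unfolding abc(2) pe prod[symmetric] by (simp add: algebra_simps)
    show "c = -(r1*r2*r3)" unfolding abc(3) prod[symmetric] by (simp add: algebra_simps)
  qed
  have rt: "x^3 + a*x^2 + b*x + c = (x - r1)*(x - r2)*(x - r3)" for x
    unfolding abc' by algebra
  have "r1 > 0" "r2 > 0" "r3 > 0"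
    using pos_root[OF a bpos c, of r1] pos_root[OF a bpos c, of r2] pos_root[OF a bpos c, of r3] rt by auto
  then show "three_pos_roots a b c"
    unfolding three_pos_roots_def poly_eq3 using abc' by blast
qed

end
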